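(* Let $L=dN$ with integers $d\ge2$, $N\ge1$, consider the flat initial condition, and let $0<|z|<r_0$ with $\mathcal E_{\rm flat}(z)\ne0$. Then for $v\in\mathcal R_z$ and $u\in\mathcal L_z$, $$\mathrm{ch}_{\rm flat}(v,u;z)=\begin{cases}\dfrac{q'_{z,\mathrm R}(v)\,u^N(u+1)^{d-1}}{q_{z,\mathrm R}(u)\,v^N(v+1)^{d-1}}(u-v),&\text{if }u(u+1)^{d-1}=v(v+1)^{d-1},\\[2mm] 0,&\text{otherwise.}\end{cases}$$
   Context: $\rho=N/L=1/d$, $r_0=\rho^\rho(1-\rho)^{1-\rho}$. Flat initial condition $Y=(y_1,\dots,y_N)$, $y_i=(i-N)d$. For $0<|z|<r_0$, $\mathcal L_z$ ($\mathcal R_z$) is the set of roots of $w^N(w+1)^{L-N}=z^L$ with real part $<-\rho$ ($>-\rho$); $q_{z,\mathrm R}(w)=\prod_{v\in\mathcal R_z}(w-v)$. $\mathcal G_\lambda(W)=\det[w_i^{N-j}(w_i+1)^{\lambda_j}]/\det[w_i^{N-j}]$; $\lambda(Y)=(y_N,y_{N-1}+1,\dots,y_1+N-1)$; $\mathcal E_{\rm flat}(z)=\mathcal G_{\lambda(Y)}(\mathcal R_z)$ and $\mathrm{ch}_{\rm flat}(v,u;z)=\mathcal G_{\lambda(Y)}(\mathcal R_z\cup\{u\}\setminus\{v\})/\mathcal E_{\rm flat}(z)$. *)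

theory Defs
  imports Complex_Main "HOL-Analysis.Derivative" "Jordan_Normal_Form.Determinant"
begin

(* Parameters: d >= 2, N >= 1, L = d*N, rho = N/L = 1/d. *)

definition rho :: "nat \<Rightarrow> real" where
  "rho d = 1 / real d"

definition r0 :: "nat \<Rightarrow> real" where
  "r0 d = rho d powr rho d * (1 - rho d) powr (1 - rho d)"

definition roots_eq :: "nat \<Rightarrow> nat \<Rightarrow> complex \<Rightarrow> complex set" where
  "roots_eq d N z = {w. w ^ N * (w + 1) ^ (d * N - N) = z ^ (d * N)}"

definition Lset :: "nat \<Rightarrow> nat \<Rightarrow> complex \<Rightarrow> complex set" where
  "Lset d N z = {w \<in> roots_eq d N z. Re w < - rho d}"

definition Rset :: "nat \<Rightarrow> nat \<Rightarrow> complex \<Rightarrow> complex set" where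
  "Rset d N z = {w \<in> roots_eq d N z. Re w > - rho d}"

definition qR :: "nat \<Rightarrow> nat \<Rightarrow> complex \<Rightarrow> complex \<Rightarrow> complex" where
  "qR d N z w = (\<Prod>v\<in>Rset d N z. w - v)"

(* an enumeration w_1..w_N (0-indexed) of an N-element set W;
   G below is symmetric in the w_i so the choice is irrelevant *)
definition enum_set :: "nat \<Rightarrow> complex set \<Rightarrow> nat \<Rightarrow> complex" where
  "enum_set N W = (SOME f. bij_betw f {..<N} W)"

(* G_lambda(W) = det[w_i^(N-j) (w_i+1)^(lambda_j)] / det[w_i^(N-j)],
   lambda given 1-indexed: lambda j for j = 1..N; matrix indices 0-based *)
definition G :: "nat \<Rightarrow> (nat \<Rightarrow> int) \<Rightarrow> complex set \<Rightarrow> complex" where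
  "G N lam W =
     (let w = enum_set N W in
      det (mat N N (\<lambda>(i, j). w i ^ (N - Suc j) * (w i + 1) powi lam (Suc j)))
      / det (mat N N (\<lambda>(i, j). w i ^ (N - Suc j))))"

(* lambda(Y) = (y_N, y_{N-1}+1, ..., y_1+N-1), Y 1-indexed: lambda_j = y_{N+1-j} + j - 1 *)
definition lambdaY :: "nat \<Rightarrow> (nat \<Rightarrow> int) \<Rightarrow> nat \<Rightarrow> int" where
  "lambdaY N Y j = Y (N + 1 - j) + int j - 1"

definition Yflat :: "nat \<Rightarrow> nat \<Rightarrow> nat \<Rightarrow> int" where
  "Yflat d N i = (int i - int N) * int d"

definition E_flat :: "nat \<Rightarrow> nat \<Rightarrow> complex \<Rightarrow> complex" where
  "E_flat d N z = G N (lambdaY N (Yflat d N)) (Rset d N z)"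

definition ch_flat :: "nat \<Rightarrow> nat \<Rightarrow> complex \<Rightarrow> complex \<Rightarrow> complex \<Rightarrow> complex" where
  "ch_flat d N v u z =
     G N (lambdaY N (Yflat d N)) ((Rset d N z \<union> {u}) - {v}) / E_flat d N z"

end

theory Submission imports Defs "HOL-Analysis.Analysis" "HOL-Computational_Algebra.Polynomial" begin

lemma root_unique:
  fixes c :: complex and d :: nat
  assumes d2: "d \<ge> 2" and ca: "cmod c < (1 / real d) * (1 - 1 / real d) ^ (d - 1)"
  shows "\<exists>!w. Re w > - (1 / real d) \<and> w * (w + 1) ^ (d - 1) = c"
proof -
  define \<rho> where "\<rho> = 1 / real d"
  define m where "m = d - 1"
  define K where "K = (1 - \<rho>) ^ m"
  define a where "a = cmod c"
  define r where "r = a / K"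
  have m1: "m \<ge> 1" using d2 unfolding m_def by auto
  have rho_pos: "\<rho> > 0" and rho_half: "\<rho> \<le> 1/2" using d2 unfolding \<rho>_def by (auto simp: field_simps)
  have mrho: "real m * \<rho> = 1 - \<rho>" using d2 unfolding m_def \<rho>_def by (auto simp: field_simps of_nat_diff)
  have Kpos: "K > 0" unfolding K_def using rho_half by auto
  have a0: "a \<ge> 0" unfolding a_def by auto
  have aK: "a < \<rho> * K" using ca unfolding a_def \<rho>_def K_def m_def by simp
  have r0: "r \<ge> 0" unfolding r_def using a0 Kpos by auto
  have rrho: "r < \<rho>" unfolding r_def using aK Kpos by (simp add: field_simps)
  define T where "T = (\<lambda>w::complex. c / (w + 1) ^ m)"
  define S where "S = cball (0::complex) r"
  have low: "cmod (w + 1) \<ge> 1 - r" if "w \<in> S" for w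
  proof -
    have "cmod w \<le> r" using that unfolding S_def by auto
    moreover have "1 \<le> cmod (w + 1) + cmod w" using norm_triangle_ineq4[of "w+1" w] by simp
    ultimately show ?thesis by linarith
  qed
  have lowR: "cmod (w + 1) > 1 - \<rho>" if "Re w > - \<rho>" for w
  proof -
    have "Re (w + 1) \<le> cmod (w + 1)" by (rule complex_Re_le_cmod)
    thus ?thesis using that by simp
  qed
  have bnd: "cmod (T w) \<le> r" if "cmod (w + 1) \<ge> 1 - \<rho>" for w
  proof -
    have "K \<le> cmod (w + 1) ^ m" unfolding K_def using rho_half that by (intro power_mono) auto
    hence "a / cmod (w + 1) ^ m \<le> a / K" using Kpos a0 by (intro divide_left_mono) auto
    thus ?thesis unfolding T_def r_def a_def by (simp add: norm_divide norm_power)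
  qed
  have TS: "T ` S \<subseteq> S"
  proof
    fix y assume "y \<in> T ` S" then obtain w where w: "w \<in> S" "y = T w" by auto
    have "cmod (w + 1) \<ge> 1 - \<rho>" using low[OF w(1)] rrho by linarith
    thus "y \<in> S" using bnd w unfolding S_def by auto
  qed
  define k where "k = real m * a / (1 - r) ^ (m + 1)"
  have r1: "1 - r > 0" using rrho rho_half by linarith
  have k0: "k \<ge> 0" unfolding k_def using a0 r1 by auto
  have k1: "k < 1"
  proof -
    have "real m * a < real m * (\<rho> * K)" using aK m1 by simp
    also have "real m * (\<rho> * K) = (1 - \<rho>) ^ (m + 1)" unfolding K_def using mrho by (simp add: mult.assoc[symmetric])
    also have "\<dots> \<le> (1 - r) ^ (m + 1)" using rrho rho_half by (intro power_mono) auto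
    finally show ?thesis unfolding k_def using r1 by (simp add: field_simps)
  qed
  have deriv: "(T has_field_derivative (- (of_nat m * c / (w + 1) ^ (m + 1)))) (at w within S)"
    if "w \<in> S" for w
  proof -
    have nz: "w + 1 \<noteq> 0" using low[OF that] r1 by auto
    have e: "(w+1)^m * (w+1)^m = ((w+1) * (w+1)^m) * (w+1)^(m - Suc 0)"
      using m1 by (cases m) (simp_all add: algebra_simps)
    show ?thesis unfolding T_def
      apply (rule derivative_eq_intros refl | simp add: nz)+
      apply (subst e)
      apply (subst mult.assoc[symmetric], subst nonzero_mult_divide_mult_cancel_right)
      using nz by (auto simp: mult.commute)
  qed
  have dbnd: "cmod (- (of_nat m * c / (w + 1) ^ (m + 1))) \<le> k" if "w \<in> S" for w
  proof -
    have "(1 - r) ^ (m + 1) \<le> cmod (w + 1) ^ (m + 1)" using low[OF that] r1 by (intro power_mono) auto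
    hence "real m * a / cmod (w + 1) ^ (m + 1) \<le> real m * a / (1 - r) ^ (m + 1)"
      using r1 a0 low[OF that] by (intro divide_left_mono mult_pos_pos zero_less_power) auto
    thus ?thesis unfolding k_def a_def by (simp add: norm_divide norm_power norm_mult)
  qed
  have lip: "dist (T x) (T y) \<le> k * dist x y" if "x \<in> S" "y \<in> S" for x y
    using field_differentiable_bound[of S T "\<lambda>w. - (of_nat m * c / (w + 1) ^ (m + 1))" k x y, OF _ deriv dbnd] that
    unfolding S_def dist_norm by auto
  have "\<exists>!x\<in>S. T x = x"
    by (rule Banach_fix[OF _ _ k0 k1 TS lip]) (use r0 in \<open>auto simp: S_def intro: compact_imp_complete\<close>)
  then obtain w0 where w0: "w0 \<in> S" "T w0 = w0" and uq: "\<And>x. x \<in> S \<Longrightarrow> T x = x \<Longrightarrow> x = w0" by blast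
  have eqv: "T w = w \<longleftrightarrow> w * (w + 1) ^ m = c" if "w + 1 \<noteq> 0" for w
    unfolding T_def using that by (auto simp: field_simps)
  show ?thesis unfolding \<rho>_def[symmetric] m_def[symmetric]
  proof (rule ex1I[of _ w0])
    have nz: "w0 + 1 \<noteq> 0" using low[OF w0(1)] r1 by auto
    have "cmod w0 \<le> r" using w0 unfolding S_def by auto
    moreover have "- cmod w0 \<le> Re w0" using abs_Re_le_cmod[of w0] by linarith
    ultimately show "- \<rho> < Re w0 \<and> w0 * (w0 + 1) ^ m = c" using eqv[OF nz] w0 rrho by auto
  next
    fix w assume w: "- \<rho> < Re w \<and> w * (w + 1) ^ m = c"
    have l: "cmod (w + 1) > 1 - \<rho>" using lowR w by auto
    hence nz: "w + 1 \<noteq> 0" using rho_half by auto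
    have Tw: "T w = w" using eqv[OF nz] w by auto
    have "cmod (T w) \<le> r" using bnd l by auto
    hence "w \<in> S" using Tw unfolding S_def by auto
    thus "w = w0" using uq Tw by auto
  qed
qed

lemma r0_pow:
  assumes "d \<ge> 2"
  shows "r0 d ^ d = (1 / real d) * (1 - 1 / real d) ^ (d - 1)"
proof -
  define \<rho> where "\<rho> = 1 / real d"
  have p: "\<rho> > 0" "1 - \<rho> > 0" using assms unfolding \<rho>_def by (auto simp: field_simps)
  have "r0 d ^ d = (\<rho> powr \<rho>) ^ d * ((1 - \<rho>) powr (1 - \<rho>)) ^ d"
    unfolding r0_def rho_def \<rho>_def by (simp add: power_mult_distrib)
  also have "\<dots> = \<rho> powr (real d * \<rho>) * (1 - \<rho>) powr (real d * (1 - \<rho>))"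
    using p by (simp add: powr_power)
  also have "real d * \<rho> = 1" using assms unfolding \<rho>_def by auto
  also have "real d * (1 - \<rho>) = real (d - 1)" using assms unfolding \<rho>_def by (auto simp: field_simps of_nat_diff)
  also have "(1 - \<rho>) powr real (d - 1) = (1 - \<rho>) ^ (d - 1)" using p by (simp add: powr_realpow)
  finally show ?thesis using p unfolding \<rho>_def by simp
qed

lemma roots_eq_alt:
  "roots_eq d N z = {w. (w * (w + 1) ^ (d - 1)) ^ N = z ^ (d * N)}"
proof -
  have "d * N - N = (d - 1) * N" by (simp add: diff_mult_distrib)
  thus ?thesis unfolding roots_eq_def by (simp add: power_mult_distrib power_mult)
qed

lemma roots_nz:
  assumes "w \<in> roots_eq d N z" "z \<noteq> 0" "d \<ge> 2" "N \<ge> 1"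
  shows "w \<noteq> 0" "w + 1 \<noteq> 0"
  using assms unfolding roots_eq_def by (auto simp: power_0_left)

lemma cmod_root:  fixes z :: complex
  assumes N1: "N \<ge> 1" and c: "c ^ N = z ^ (d * N)"
shows "cmod c = cmod z ^ d"
  proof -
    have "cmod (c^N) = cmod (z^(d*N))" using c by (rule arg_cong)
    hence "cmod c ^ N = (cmod z ^ d) ^ N" by (simp only: norm_power power_mult)
    thus "cmod c = cmod z ^ d" by (rule power_eq_imp_eq_base) (use N1 in auto)
  qed

lemma R_bij:
  fixes z :: complex
  assumes d2: "d \<ge> 2" and N1: "N \<ge> 1" and z0: "0 < cmod z" and zr: "cmod z < r0 d"
  shows "bij_betw (\<lambda>w. w * (w + 1) ^ (d - 1)) (Rset d N z) {c. c ^ N = z ^ (d * N)}"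
    and "\<And>c. c ^ N = z ^ (d * N) \<Longrightarrow> \<exists>!w. Re w > - rho d \<and> w * (w + 1) ^ (d - 1) = c"
proof -
  let ?g = "\<lambda>w::complex. w * (w + 1) ^ (d - 1)"
  have zd: "cmod z ^ d < (1 / real d) * (1 - 1 / real d) ^ (d - 1)"
  proof -
    have "cmod z ^ d < r0 d ^ d" by (rule power_strict_mono) (use z0 zr d2 in auto)
    thus ?thesis using r0_pow[OF d2] by simp
  qed
  show ex: "\<exists>!w. Re w > - rho d \<and> ?g w = c" if c: "c ^ N = z ^ (d * N)" for c
  proof -
    have "cmod c = cmod z ^ d" by (rule cmod_root[OF N1 c])
    hence "cmod c < (1 / real d) * (1 - 1 / real d) ^ (d - 1)" using zd by simp
    from root_unique[OF d2 this] show ?thesis unfolding rho_def .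
  qed
  show "bij_betw ?g (Rset d N z) {c. c ^ N = z ^ (d * N)}"
    unfolding bij_betw_def inj_on_def
  proof (intro conjI ballI impI equalityI subsetI)
    fix x y assume x: "x \<in> Rset d N z" and y: "y \<in> Rset d N z" and e: "?g x = ?g y"
    have "(?g x) ^ N = z ^ (d * N)" using x unfolding Rset_def roots_eq_alt by auto
    from ex[OF this] show "x = y" using x y e unfolding Rset_def by auto
  next
    fix c assume "c \<in> ?g ` Rset d N z" thus "c \<in> {c. c ^ N = z ^ (d * N)}"
      unfolding Rset_def roots_eq_alt by auto
  next
    fix c assume "c \<in> {c. c ^ N = z ^ (d * N)}"
    hence c: "c ^ N = z ^ (d * N)" by auto
    then obtain w where "Re w > - rho d" "?g w = c" using ex by blast
    thus "c \<in> ?g ` Rset d N z" using c unfolding Rset_def roots_eq_alt by auto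
  qed
qed

lemma R_card:
  fixes z :: complex
  assumes d2: "d \<ge> 2" and N1: "N \<ge> 1" and z0: "0 < cmod z" and zr: "cmod z < r0 d"
  shows "card (Rset d N z) = N" "finite (Rset d N z)"
proof -
  have c: "card {c. c ^ N = z ^ (d * N)} = N" using z0 N1 by (intro card_nth_roots) auto
  have f: "finite {c::complex. c ^ N = z ^ (d * N)}" using c N1 by (intro card_ge_0_finite) auto
  show "card (Rset d N z) = N" using bij_betw_same_card[OF R_bij(1)[OF assms]] c by simp
  show "finite (Rset d N z)" using bij_betw_finite[OF R_bij(1)[OF assms]] f by simp
qed


lemma det_perm_enum:
  fixes f h :: "nat \<Rightarrow> complex"
  assumes f: "bij_betw f {..<n} W" and h: "bij_betw h {..<n} W"
  shows "\<exists>s::complex. s \<noteq> 0 \<and> (\<forall>F :: complex \<Rightarrow> nat \<Rightarrow> complex.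
           Determinant.det (Matrix.mat n n (\<lambda>(i,j). F (h i) j)) = s * Determinant.det (Matrix.mat n n (\<lambda>(i,j). F (f i) j)))"
proof -
  define p where "p i = (if i < n then inv_into {..<n} f (h i) else i)" for i
  have b1: "bij_betw (inv_into {..<n} f \<circ> h) {..<n} {..<n}"
    by (rule bij_betw_trans[OF h bij_betw_inv_into[OF f]])
  have b2: "bij_betw p {..<n} {..<n}"
    using b1 by (rule bij_betw_cong[THEN iffD1, rotated]) (auto simp: p_def)
  have pp: "p permutes {0..<n}"
    by (rule bij_imp_permutes) (use b2 in \<open>auto simp: p_def atLeast0LessThan\<close>)
  have fp: "f (p i) = h i" if "i < n" for i
  proof -
    have "h i \<in> f ` {..<n}" using f h that unfolding bij_betw_def by auto
    thus ?thesis unfolding p_def using that by (simp add: f_inv_into_f)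
  qed
  have pl: "p i < n" if "i < n" for i using b2 that unfolding bij_betw_def by auto
  show ?thesis
  proof (intro exI conjI allI)
    show "signof p \<noteq> (0::complex)" by (simp add: sign_def)
    fix F :: "complex \<Rightarrow> nat \<Rightarrow> complex"
    let ?A = "Matrix.mat n n (\<lambda>(i,j). F (f i) j)"
    have "Matrix.mat n n (\<lambda>(i,j). ?A $$ (p i, j)) = Matrix.mat n n (\<lambda>(i,j). F (h i) j)"
      by (rule eq_matI) (auto simp: pl fp)
    thus "Determinant.det (Matrix.mat n n (\<lambda>(i,j). F (h i) j)) = signof p * Determinant.det ?A"
      using Determinant.det_permute_rows[OF _ pp, of ?A] by auto
  qed
qed

lemma G_via:
  assumes h: "bij_betw h {..<N} W"
  shows "G N lam W = Determinant.det (Matrix.mat N N (\<lambda>(i, j). h i ^ (N - Suc j) * (h i + 1) powi lam (Suc j)))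
      / Determinant.det (Matrix.mat N N (\<lambda>(i, j). h i ^ (N - Suc j)))"
proof -
  define e where "e = enum_set N W"
  have e: "bij_betw e {..<N} W" unfolding e_def enum_set_def
    by (rule someI_ex[of "\<lambda>f. bij_betw f {..<N} W"]) (use h in blast)
  obtain s :: complex where s: "s \<noteq> 0" and sF: "\<And>F :: complex \<Rightarrow> nat \<Rightarrow> complex.
           Determinant.det (Matrix.mat N N (\<lambda>(i,j). F (e i) j)) = s * Determinant.det (Matrix.mat N N (\<lambda>(i,j). F (h i) j))"
    using det_perm_enum[OF h e] by blast
  have 1: "Determinant.det (Matrix.mat N N (\<lambda>(i, j). e i ^ (N - Suc j) * (e i + 1) powi lam (Suc j))) =
     s * Determinant.det (Matrix.mat N N (\<lambda>(i, j). h i ^ (N - Suc j) * (h i + 1) powi lam (Suc j)))"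
    using sF[of "\<lambda>x j. x ^ (N - Suc j) * (x + 1) powi lam (Suc j)"] by simp
  have 2: "Determinant.det (Matrix.mat N N (\<lambda>(i, j). e i ^ (N - Suc j))) =
     s * Determinant.det (Matrix.mat N N (\<lambda>(i, j). h i ^ (N - Suc j)))"
    using sF[of "\<lambda>x j. x ^ (N - Suc j)"] by simp
  show ?thesis unfolding G_def e_def[symmetric] Let_def 1 2 using s by simp
qed

lemma det_row_scale:
  fixes a :: "nat \<Rightarrow> 'a::comm_ring_1"
  shows "Determinant.det (Matrix.mat n n (\<lambda>(i,j). a i * b i j)) = (\<Prod>i<n. a i) * Determinant.det (Matrix.mat n n (\<lambda>(i,j). b i j))"
proof -
  have "Determinant.det (Matrix.mat n n (\<lambda>(i,j). a i * b i j)) =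
     (\<Sum>p\<in>{p. p permutes {0..<n}}. signof p * (\<Prod>i=0..<n. a i * b i (p i)))"
    by (simp add: Determinant.det_def)
  also have "\<dots> = (\<Sum>p\<in>{p. p permutes {0..<n}}. (\<Prod>i<n. a i) * (signof p * (\<Prod>i=0..<n. b i (p i))))"
    by (intro sum.cong refl) (simp add: prod.distrib atLeast0LessThan)
  also have "\<dots> = (\<Prod>i<n. a i) * Determinant.det (Matrix.mat n n (\<lambda>(i,j). b i j))"
    by (simp add: Determinant.det_def sum_distrib_left[symmetric])
  finally show ?thesis .
qed

lemma poly_roots_eq:
  fixes P :: "complex poly" and a :: "nat \<Rightarrow> complex"
  assumes I: "finite I" and inj: "inj_on a I" and deg: "degree P \<le> card I"
    and roots: "\<And>i. i \<in> I \<Longrightarrow> poly P (a i) = 0"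
  shows "P = smult (coeff P (card I)) (\<Prod>i\<in>I. [:- a i, 1:])"
proof -
  define Q where "Q = (\<Prod>i\<in>I. [:- a i, 1:])"
  have dQ: "degree Q = card I" unfolding Q_def
    by (subst degree_prod_sum_eq) auto
  have lQ: "coeff Q (card I) = 1" using lead_coeff_prod[of "\<lambda>i. [:- a i, 1:]" I] dQ unfolding Q_def by simp
  define R where "R = P - smult (coeff P (card I)) Q"
  have dR: "degree R \<le> card I" unfolding R_def using deg dQ
    by (intro degree_diff_le) auto
  have cR: "coeff R (card I) = 0" unfolding R_def using lQ by simp
  have rR: "poly R (a i) = 0" if "i \<in> I" for i
  proof -
    have "poly Q (a i) = 0" unfolding Q_def poly_prod using that I by (auto intro!: prod_zero)
    thus ?thesis unfolding R_def using roots[OF that] by simp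
  qed
  have "R = 0"
  proof (rule ccontr)
    assume R0: "R \<noteq> 0"
    have "degree R \<noteq> card I" using cR R0 by (metis leading_coeff_0_iff)
    hence lt: "degree R < card I" using dR by auto
    have "a ` I \<subseteq> {x. poly R x = 0}" using rR by auto
    hence "card (a ` I) \<le> card {x. poly R x = 0}" using poly_roots_finite[OF R0] by (intro card_mono)
    also have "\<dots> \<le> degree R" by (rule card_poly_roots_bound[OF R0])
    finally show False using card_image[OF inj] lt by simp
  qed
  thus ?thesis unfolding R_def Q_def by simp
qed

lemma vdm_replace:
  fixes f :: "nat \<Rightarrow> complex" and x y :: complex
  assumes k: "k < n" and inj: "inj_on f ({..<n} - {k})"
  shows "Determinant.det (Matrix.mat n n (\<lambda>(i,j). (f(k:=x)) i ^ (n - Suc j))) * (\<Prod>i\<in>{..<n}-{k}. (y - f i))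
       = Determinant.det (Matrix.mat n n (\<lambda>(i,j). (f(k:=y)) i ^ (n - Suc j))) * (\<Prod>i\<in>{..<n}-{k}. (x - f i))"
proof -
  define V where "V x = Matrix.mat n n (\<lambda>(i,j). (f(k:=x)) i ^ (n - Suc j))" for x
  define C where "C j = cofactor (V 0) k j" for j
  define I where "I = {..<n} - {k}"
  have cof: "cofactor (V x) k j = C j" for x j
  proof -
    have "mat_delete (V x) k j = mat_delete (V 0) k j"
      by (rule eq_matI) (auto simp: mat_delete_def V_def)
    thus ?thesis unfolding C_def cofactor_def by simp
  qed
  have Dx: "Determinant.det (V x) = (\<Sum>j<n. C j * x ^ (n - Suc j))" for x
  proof -
    have "Determinant.det (V x) = (\<Sum>j<n. V x $$ (k,j) * cofactor (V x) k j)"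
      by (rule laplace_expansion_row[OF _ k]) (simp add: V_def)
    also have "\<dots> = (\<Sum>j<n. C j * x ^ (n - Suc j))"
      by (intro sum.cong refl) (simp only: cof, simp add: V_def k)
    finally show ?thesis .
  qed
  define P where "P = (\<Sum>j<n. monom (C j) (n - Suc j))"
  have PV: "poly P x = Determinant.det (V x)" for x unfolding P_def Dx by (simp add: poly_sum poly_monom)
  have cI: "card I = n - 1" unfolding I_def using k by simp
  have deg: "degree P \<le> card I" unfolding P_def cI
    by (intro degree_sum_le) (auto intro: order.trans[OF degree_monom_le])
  have roots: "poly P (f i) = 0" if "i \<in> I" for i
  proof -
    have ik: "i \<noteq> k" "i < n" using that unfolding I_def by auto
    have "Determinant.det (V (f i)) = 0"
      by (rule Determinant.det_identical_rows[OF _ ik(1) ik(2) k]) (auto simp: V_def ik k intro!: eq_vecI)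
    thus ?thesis using PV by simp
  qed
  have P: "P = smult (coeff P (card I)) (\<Prod>i\<in>I. [:- f i, 1:])"
    by (rule poly_roots_eq[OF _ _ deg roots]) (use inj in \<open>auto simp: I_def\<close>)
  have "Determinant.det (V x) = coeff P (card I) * (\<Prod>i\<in>I. x - f i)" for x
    unfolding PV[symmetric] by (subst P) (simp add: poly_prod)
  thus ?thesis unfolding V_def[symmetric] I_def[symmetric] by simp
qed


lemma flat_lam: "d \<ge> 1 \<Longrightarrow> j < N \<Longrightarrow> lambdaY N (Yflat d N) (Suc j) = - int (j * (d - 1))"
  unfolding lambdaY_def Yflat_def
  by (auto simp: of_nat_diff algebra_simps)

lemma flat_entry:
  fixes w :: complex
  assumes d1: "d \<ge> 1" and w0: "w \<noteq> 0" and w1: "w + 1 \<noteq> 0" and j: "j < N"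
  shows "w ^ (N - Suc j) * (w + 1) powi lambdaY N (Yflat d N) (Suc j)
       = w ^ (N - 1) * (inverse (w * (w + 1) ^ (d - 1))) ^ j"
proof -
  have e1: "(w + 1) powi lambdaY N (Yflat d N) (Suc j) = inverse ((w + 1) ^ (j * (d - 1)))"
    unfolding flat_lam[OF d1 j] by (simp add: power_int_minus flip: of_nat_mult)
  have e2: "w ^ (N - 1) = w ^ (N - Suc j) * w ^ j"
    using j by (simp add: power_add[symmetric])
  have e4: "((w+1)^(d-1))^j = (w+1)^(j*(d-1))" by (simp add: power_mult[symmetric] mult.commute)
  have e3: "(inverse (w * (w + 1) ^ (d - 1))) ^ j = inverse (w ^ j) * inverse ((w + 1) ^ (j * (d - 1)))"
    by (simp only: inverse_mult_distrib power_mult_distrib power_inverse e4)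
  have e5: "w ^ j * inverse (w ^ j) = 1" using w0 by simp
  show ?thesis unfolding e1 e2 e3
    by (simp only: mult.assoc e5 mult_1 flip: mult.assoc[of "w ^ j"])
qed

lemma deriv_qR:
  fixes R :: "complex set"
  assumes "finite R" "v \<in> R"
  shows "deriv (\<lambda>w. \<Prod>x\<in>R. (w - x)) v = (\<Prod>x\<in>R-{v}. (v - x))"
proof -
  have "((\<lambda>w. \<Prod>x\<in>R. (w - x)) has_field_derivative
          (\<Sum>x\<in>R. 1 * (\<Prod>y\<in>R-{x}. (v - y)))) (at v)"
    by (rule has_field_derivative_prod) (auto intro!: derivative_eq_intros)
  moreover have "(\<Sum>x\<in>R. 1 * (\<Prod>y\<in>R-{x}. (v - y))) = (\<Prod>x\<in>R-{v}. (v - x))"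
  proof -
    have "(\<Sum>x\<in>R. 1 * (\<Prod>y\<in>R-{x}. (v - y))) = (\<Prod>y\<in>R-{v}. (v - y)) + (\<Sum>x\<in>R-{v}. 1 * (\<Prod>y\<in>R-{x}. (v - y)))"
      using sum.remove[OF assms] by simp
    also have "(\<Sum>x\<in>R-{v}. 1 * (\<Prod>y\<in>R-{x}. (v - y))) = 0"
      using assms by (intro sum.neutral ballI) (auto intro!: prod_zero bexI[of _ v])
    finally show ?thesis by simp
  qed
  ultimately show ?thesis by (metis DERIV_imp_deriv)
qed


theorem lemma10p3:
  fixes d N :: nat and z v u :: complex
  assumes "d \<ge> 2" and "N \<ge> 1"
    and "0 < cmod z" and "cmod z < r0 d"
    and "E_flat d N z \<noteq> 0"
    and "v \<in> Rset d N z" and "u \<in> Lset d N z"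
  shows "ch_flat d N v u z =
    (if u * (u + 1) ^ (d - 1) = v * (v + 1) ^ (d - 1)
     then deriv (qR d N z) v * u ^ N * (u + 1) ^ (d - 1)
          / (qR d N z u * v ^ N * (v + 1) ^ (d - 1)) * (u - v)
     else 0)"
proof -
  note d2 = assms(1) and N1 = assms(2) and z0 = assms(3) and zr = assms(4) and E0 = assms(5)
    and vR = assms(6) and uL = assms(7)
  define g where "g w = w * (w + 1) ^ (d - 1)" for w :: complex
  define R where "R = Rset d N z"
  define lam where "lam = lambdaY N (Yflat d N)"
  define W where "W = (R \<union> {u}) - {v}"
  have zn: "z \<noteq> 0" using z0 by auto
  have cR: "card R = N" and fR: "finite R" using R_card[OF d2 N1 z0 zr] unfolding R_def by auto
  have Rroots: "x \<noteq> 0" "x + 1 \<noteq> 0" if "x \<in> R" for x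
    using roots_nz[of x d N z] that zn d2 N1 unfolding R_def Rset_def by auto
  have uroot: "u \<in> roots_eq d N z" using uL unfolding Lset_def by auto
  have u0: "u \<noteq> 0" "u + 1 \<noteq> 0" using roots_nz[OF uroot zn d2 N1] by auto
  have uR: "u \<notin> R" using uL unfolding Lset_def Rset_def R_def by auto
  have vR': "v \<in> R" using vR unfolding R_def .
  have uv: "u \<noteq> v" using uR vR' by auto
  have guN: "(g u) ^ N = z ^ (d * N)" using uroot unfolding roots_eq_alt g_def by auto
  obtain v' where v': "Re v' > - rho d" "g v' = g u"
    using R_bij(2)[OF d2 N1 z0 zr guN] unfolding g_def by blast
  have v'R: "v' \<in> R" using v' guN unfolding R_def Rset_def roots_eq_alt g_def by auto
  obtain f where f: "bij_betw f {..<N} R"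
    using ex_bij_betw_nat_finite[OF fR] cR by (auto simp: atLeast0LessThan)
  have finj: "inj_on f {..<N}" and fim: "f ` {..<N} = R" using f unfolding bij_betw_def by auto
  obtain k where k: "k < N" "f k = v" using vR' fim by force
  define f' where "f' = f(k := u)"
  have fim': "f ` ({..<N} - {k}) = R - {v}"
    using fim k finj by (simp add: inj_on_image_set_diff)
  have f'bij: "bij_betw f' {..<N} W"
    unfolding bij_betw_def
  proof
    show "inj_on f' {..<N}"
    proof (rule inj_onI)
      fix i j assume i: "i \<in> {..<N}" and j: "j \<in> {..<N}" and e: "f' i = f' j"
      have fiR: "f i \<in> R" "f j \<in> R" using i j fim by auto
      show "i = j"
        using e fiR uR finj i j unfolding f'_def inj_on_def by (auto split: if_splits)
    qed
    have "f' ` {..<N} = insert u (f ` ({..<N} - {k}))"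
      unfolding f'_def using k by (auto simp: image_iff)
    thus "f' ` {..<N} = W" unfolding fim' W_def using uv by auto
  qed
  have froots: "f i \<noteq> 0" "f i + 1 \<noteq> 0" if "i < N" for i
    using Rroots[of "f i"] fim that by auto
  have f'roots: "f' i \<noteq> 0" "f' i + 1 \<noteq> 0" if "i < N" for i
    using froots[OF that] u0 unfolding f'_def by auto
  define B where "B h = Matrix.mat N N (\<lambda>(i,j). (inverse (g (h i))) ^ j)" for h :: "nat \<Rightarrow> complex"
  define V where "V h = Matrix.mat N N (\<lambda>(i,j). h i ^ (N - Suc j))" for h :: "nat \<Rightarrow> complex"
  have num: "Determinant.det (Matrix.mat N N (\<lambda>(i, j). h i ^ (N - Suc j) * (h i + 1) powi lam (Suc j)))
      = (\<Prod>i<N. h i ^ (N - 1)) * Determinant.det (B h)"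
    if "\<And>i. i < N \<Longrightarrow> h i \<noteq> 0 \<and> h i + 1 \<noteq> 0" for h
  proof -
    have "Matrix.mat N N (\<lambda>(i, j). h i ^ (N - Suc j) * (h i + 1) powi lam (Suc j))
       = Matrix.mat N N (\<lambda>(i, j). h i ^ (N - 1) * (inverse (g (h i))) ^ j)"
      using that d2 unfolding lam_def g_def by (intro eq_matI) (auto simp: flat_entry)
    thus ?thesis unfolding B_def by (simp add: det_row_scale)
  qed
  have GR: "E_flat d N z = (\<Prod>i<N. f i ^ (N - 1)) * Determinant.det (B f) / Determinant.det (V f)"
    unfolding E_flat_def R_def[symmetric] lam_def[symmetric] G_via[OF f] V_def
    using num froots by simp
  have GW: "G N lam W = (\<Prod>i<N. f' i ^ (N - 1)) * Determinant.det (B f') / Determinant.det (V f')"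
    unfolding G_via[OF f'bij] V_def using num f'roots by simp
  have ch: "ch_flat d N v u z = G N lam W / E_flat d N z"
    unfolding ch_flat_def lam_def W_def R_def ..
  show ?thesis
  proof (cases "g u = g v")
    case False
    have v'v: "v' \<noteq> v" using False v' by auto
    obtain i0 where i0: "i0 < N" "f i0 = v'" using v'R fim by force
    have i0k: "i0 \<noteq> k" using i0 k v'v by auto
    have "Determinant.det (B f') = 0"
      by (rule Determinant.det_identical_rows[OF _ i0k i0(1) k(1)])
         (auto simp: B_def f'_def i0 i0k k v'(2) intro!: eq_vecI)
    hence "G N lam W = 0" unfolding GW by simp
    thus ?thesis unfolding ch using False unfolding g_def by simp
  next
    case True
    have Bf: "B f' = B f" unfolding B_def f'_def using True k
      by (intro eq_matI) auto
    have Pf: "(\<Prod>i<N. f' i ^ (N - 1)) * v ^ (N - 1) = (\<Prod>i<N. f i ^ (N - 1)) * u ^ (N - 1)"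
    proof -
      have a: "(\<Prod>i<N. h i ^ (N - 1)) = h k ^ (N - 1) * (\<Prod>i\<in>{..<N}-{k}. h i ^ (N - 1))" for h :: "nat \<Rightarrow> complex"
        using k by (intro prod.remove) auto
      have b: "(\<Prod>i\<in>{..<N}-{k}. f' i ^ (N - 1)) = (\<Prod>i\<in>{..<N}-{k}. f i ^ (N - 1))"
        unfolding f'_def by (intro prod.cong) auto
      show ?thesis unfolding a[of f'] a[of f] b using k unfolding f'_def by simp
    qed
    define Pu where "Pu = (\<Prod>i\<in>{..<N}-{k}. (u - f i))"
    define Pv where "Pv = (\<Prod>i\<in>{..<N}-{k}. (v - f i))"
    have vdm: "Determinant.det (V f') * Pv = Determinant.det (V f) * Pu"
    proof -
      have "inj_on f ({..<N} - {k})" using finj by (rule inj_on_subset) auto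
      from vdm_replace[OF k(1) this, of u v]
      show ?thesis unfolding V_def Pu_def Pv_def f'_def using k by (simp add: fun_upd_idem)
    qed
    have Pu0: "Pu \<noteq> 0" unfolding Pu_def using uR fim by (auto simp: image_iff)
    have Pv0: "Pv \<noteq> 0" unfolding Pv_def using finj k
      by (auto simp: inj_on_def)
    have E': "(\<Prod>i<N. f i ^ (N - 1)) \<noteq> 0" "Determinant.det (B f) \<noteq> 0" "Determinant.det (V f) \<noteq> 0"
      using E0 unfolding GR by auto
    have reidx: "(\<Prod>x\<in>R-{v}. (w - x)) = (\<Prod>i\<in>{..<N}-{k}. (w - f i))" for w
    proof -
      have "inj_on f ({..<N} - {k})" using finj by (rule inj_on_subset) auto
      thus ?thesis unfolding fim'[symmetric] by (simp add: prod.reindex)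
    qed
    have qv: "deriv (qR d N z) v = Pv"
    proof -
      have "qR d N z = (\<lambda>w. \<Prod>x\<in>R. (w - x))" unfolding qR_def R_def by auto
      thus ?thesis using deriv_qR[OF fR vR'] reidx unfolding Pv_def by simp
    qed
    have qu: "qR d N z u = (u - v) * Pu"
      unfolding qR_def R_def[symmetric] Pu_def reidx[symmetric]
      using prod.remove[OF fR vR', of "\<lambda>x. u - x"] by simp
    have gv0: "g v \<noteq> 0" using Rroots[OF vR'] unfolding g_def by simp
    have rhs: "u ^ N * (u + 1) ^ (d - 1) = u ^ (N - 1) * g u"
              "v ^ N * (v + 1) ^ (d - 1) = v ^ (N - 1) * g v"
      unfolding g_def using N1 by (simp_all add: power_eq_if mult_ac)
    have dVf': "Determinant.det (V f') = Determinant.det (V f) * Pu / Pv" using vdm Pv0 by (simp add: field_simps)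
    define P where "P = (\<Prod>i<N. f i ^ (N - 1))"
    define P' where "P' = (\<Prod>i<N. f' i ^ (N - 1))"
    have P0: "P \<noteq> 0" using E'(1) unfolding P_def .
    have vN: "v ^ (N - 1) \<noteq> 0" using Rroots[OF vR'] by simp
    have P'e: "P' = P * u ^ (N - 1) / v ^ (N - 1)" using Pf vN unfolding P_def P'_def by (simp add: field_simps)
    have "ch_flat d N v u z = (P' * Determinant.det (B f) / (Determinant.det (V f) * Pu / Pv)) / (P * Determinant.det (B f) / Determinant.det (V f))"
      unfolding ch GW GR Bf dVf' P_def P'_def ..
    also have "\<dots> = u ^ (N - 1) * Pv / (v ^ (N - 1) * Pu)"
      unfolding P'e using E'(2,3) P0 Pu0 Pv0 vN by (simp add: field_simps)
    also have "\<dots> = Pv * (u ^ (N - 1) * g u) / ((u - v) * Pu * (v ^ (N - 1) * g v)) * (u - v)"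
      using True gv0 uv Pu0 vN Rroots[OF vR'] by (simp add: field_simps)
    finally show ?thesis unfolding qv qu rhs[symmetric] using True unfolding g_def by (simp add: mult_ac)
  qed
qed

end
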